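(* Let $t$ be a term containing no ascription subterm, $\Gamma$ a typing context and $S$ a type. If $\Gamma\vdash^Z t:S$ is derivable in Zdancewic's type system, then there exists a type $S'$ with $S'<:S$ such that $\Gamma\vdash t:S'$ is derivable in the syntax-directed type system.
   Context: Fix a security lattice $(\mathsf{Label},\preccurlyeq)$ with join $\sqcup$, meet $\sqcap$, least element $\bot$ and greatest element $\top$; $\ell$ ranges over labels. Types: $S ::= \mathsf{Bool}_\ell \mid S \to_\ell S$. Terms: $t ::= x \mid b_\ell \mid (\lambda x{:}S.t)_\ell \mid t\,t \mid t \oplus t \mid \mathsf{if}\ t\ \mathsf{then}\ t\ \mathsf{else}\ t \mid t :: S$, with $b\in\{\mathsf{true},\mathsf{false}\}$ and $\oplus\in\{\wedge,\vee,\Rightarrow\}$. A typing context $\Gamma$ is a finite partial map from variables to types. Label stamping: $\mathsf{Bool}_\ell \sqcup \ell' = \mathsf{Bool}_{\ell\sqcup\ell'}$ and $(S_1\to_\ell S_2)\sqcup\ell' = S_1 \to_{\ell\sqcup\ell'} S_2$. Subtyping $<:$ is the least relation with: $\mathsf{Bool}_\ell <: \mathsf{Bool}_{\ell'}$ if $\ell\preccurlyeq\ell'$; $S_1\to_\ell S_2 <: S_1'\to_{\ell'}S_2'$ if $S_1'<:S_1$, $S_2<:S_2'$, $\ell\preccurlyeq\ell'$. Subtype join $\curlyvee$ and meet $\curlywedge$ are the partial functions defined mutually by: $\mathsf{Bool}_\ell \curlyvee \mathsf{Bool}_{\ell'}=\mathsf{Bool}_{\ell\sqcup\ell'}$, $(S_{11}\to_\ell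 S_{12})\curlyvee(S_{21}\to_{\ell'}S_{22}) = (S_{11}\curlywedge S_{21})\to_{\ell\sqcup\ell'}(S_{12}\curlyvee S_{22})$; $\mathsf{Bool}_\ell \curlywedge \mathsf{Bool}_{\ell'}=\mathsf{Bool}_{\ell\sqcap\ell'}$, $(S_{11}\to_\ell S_{12})\curlywedge(S_{21}\to_{\ell'}S_{22}) = (S_{11}\curlyvee S_{21})\to_{\ell\sqcap\ell'}(S_{12}\curlywedge S_{22})$; undefined otherwise (including when a recursive component is undefined). The syntax-directed system $\Gamma\vdash t:S$ has rules: (Sx) $\Gamma\vdash x:S$ if $x{:}S\in\Gamma$; (Sb) $\Gamma\vdash b_\ell:\mathsf{Bool}_\ell$; (S$\lambda$) from $\Gamma,x{:}S_1\vdash t:S_2$ infer $\Gamma\vdash(\lambda x{:}S_1.t)_\ell : S_1\to_\ell S_2$; (S$\oplus$) from $\Gamma\vdash t_1:\mathsf{Bool}_{\ell_1}$, $\Gamma\vdash t_2:\mathsf{Bool}_{\ell_2}$ infer $\Gamma\vdash t_1\oplus t_2:\mathsf{Bool}_{\ell_1\sqcup\ell_2}$; (Sapp) from $\Gamma\vdash t_1:S_{11}\to_\ell S_{12}$, $\Gamma\vdash t_2:S_2$, $S_2<:S_{11}$ infer $\Gamma\vdash t_1\,t_2 : S_{12}\sqcup\ell$; (Sif) from $\Gamma\vdash t:\mathsf{Bool}_\ell$, $\Gamma\vdash t_1:S_1$, $\Gamma\vdash t_2:S_2$ infer $\Gamma\vdash \mathsf{if}\ t\ \mathsf{then}\ t_1\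 \mathsf{else}\ t_2 : (S_1\curlyvee S_2)\sqcup\ell$ (when defined); (S::) from $\Gamma\vdash t:S_1$, $S_1<:S_2$ infer $\Gamma\vdash t::S_2 : S_2$. Zdancewic's system $\Gamma\vdash^Z t:S$ (for ascription-free terms) has the same rules (Sx), (Sb), (S$\lambda$), (S$\oplus$) (with $\vdash^Z$), plus: (Zapp) from $\Gamma\vdash^Z t_1:S_{11}\to_\ell S_{12}$ and $\Gamma\vdash^Z t_2 : S_{11}$ infer $\Gamma\vdash^Z t_1\,t_2 : S_{12}\sqcup\ell$; (Zif) from $\Gamma\vdash^Z t:\mathsf{Bool}_\ell$, $\Gamma\vdash^Z t_1 : S\sqcup\ell$, $\Gamma\vdash^Z t_2:S\sqcup\ell$ infer $\Gamma\vdash^Z\mathsf{if}\ t\ \mathsf{then}\ t_1\ \mathsf{else}\ t_2 : S\sqcup\ell$; (Zsub) from $\Gamma\vdash^Z t:S$ and $S<:S'$ infer $\Gamma\vdash^Z t:S'$. *)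

theory Defs
  imports Main
begin

text \<open>Security labels: an arbitrary bounded lattice 'l
  (order = precedes, sup = join, inf = meet, bot, top).\<close>

datatype 'l ty = TBool 'l | TFun "'l ty" 'l "'l ty"

datatype bop = BAnd | BOr | BImp

datatype ('v, 'l) tm =
    Var 'v
  | BConst bool 'l
  | Lam 'v "'l ty" "('v, 'l) tm" 'l
  | App "('v, 'l) tm" "('v, 'l) tm"
  | BinOp bop "('v, 'l) tm" "('v, 'l) tm"
  | If "('v, 'l) tm" "('v, 'l) tm" "('v, 'l) tm"
  | Asc "('v, 'l) tm" "'l ty"

type_synonym ('v, 'l) ctx = "'v \<rightharpoonup> 'l ty"

fun stamp :: "'l::bounded_lattice ty \<Rightarrow> 'l \<Rightarrow> 'l ty" where
  "stamp (TBool l) l' = TBool (sup l l')"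
| "stamp (TFun S1 l S2) l' = TFun S1 (sup l l') S2"

inductive subty :: "'l::bounded_lattice ty \<Rightarrow> 'l ty \<Rightarrow> bool" where
  SubBool: "l \<le> l' \<Longrightarrow> subty (TBool l) (TBool l')"
| SubFun: "subty S1' S1 \<Longrightarrow> subty S2 S2' \<Longrightarrow> l \<le> l' \<Longrightarrow>
            subty (TFun S1 l S2) (TFun S1' l' S2')"

fun tjoin :: "'l::bounded_lattice ty \<Rightarrow> 'l ty \<Rightarrow> 'l ty option"
and tmeet :: "'l::bounded_lattice ty \<Rightarrow> 'l ty \<Rightarrow> 'l ty option" where
  "tjoin (TBool l) (TBool l') = Some (TBool (sup l l'))"
| "tjoin (TFun S11 l S12) (TFun S21 l' S22) =
     (case (tmeet S11 S21, tjoin S12 S22) of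
        (Some A, Some B) \<Rightarrow> Some (TFun A (sup l l') B)
      | _ \<Rightarrow> None)"
| "tjoin _ _ = None"
| "tmeet (TBool l) (TBool l') = Some (TBool (inf l l'))"
| "tmeet (TFun S11 l S12) (TFun S21 l' S22) =
     (case (tjoin S11 S21, tmeet S12 S22) of
        (Some A, Some B) \<Rightarrow> Some (TFun A (inf l l') B)
      | _ \<Rightarrow> None)"
| "tmeet _ _ = None"

fun asc_free :: "('v, 'l) tm \<Rightarrow> bool" where
  "asc_free (Var x) = True"
| "asc_free (BConst b l) = True"
| "asc_free (Lam x S t l) = asc_free t"
| "asc_free (App t1 t2) = (asc_free t1 \<and> asc_free t2)"
| "asc_free (BinOp op t1 t2) = (asc_free t1 \<and> asc_free t2)"
| "asc_free (If t t1 t2) = (asc_free t \<and> asc_free t1 \<and> asc_free t2)"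
| "asc_free (Asc t S) = False"

inductive styping :: "('v, 'l::bounded_lattice) ctx \<Rightarrow> ('v, 'l) tm \<Rightarrow> 'l ty \<Rightarrow> bool" where
  Sx: "\<Gamma> x = Some S \<Longrightarrow> styping \<Gamma> (Var x) S"
| Sb: "styping \<Gamma> (BConst b l) (TBool l)"
| Slam: "styping (\<Gamma>(x \<mapsto> S1)) t S2 \<Longrightarrow> styping \<Gamma> (Lam x S1 t l) (TFun S1 l S2)"
| Sop: "styping \<Gamma> t1 (TBool l1) \<Longrightarrow> styping \<Gamma> t2 (TBool l2) \<Longrightarrow>
        styping \<Gamma> (BinOp op t1 t2) (TBool (sup l1 l2))"
| Sapp: "styping \<Gamma> t1 (TFun S11 l S12) \<Longrightarrow> styping \<Gamma> t2 S2 \<Longrightarrow> subty S2 S11 \<Longrightarrow>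
         styping \<Gamma> (App t1 t2) (stamp S12 l)"
| Sif: "styping \<Gamma> t (TBool l) \<Longrightarrow> styping \<Gamma> t1 S1 \<Longrightarrow> styping \<Gamma> t2 S2 \<Longrightarrow>
        tjoin S1 S2 = Some S \<Longrightarrow> styping \<Gamma> (If t t1 t2) (stamp S l)"
| Sasc: "styping \<Gamma> t S1 \<Longrightarrow> subty S1 S2 \<Longrightarrow> styping \<Gamma> (Asc t S2) S2"

text \<open>Zdancewic's system (for ascription-free terms; no rule for ascription).\<close>
inductive ztyping :: "('v, 'l::bounded_lattice) ctx \<Rightarrow> ('v, 'l) tm \<Rightarrow> 'l ty \<Rightarrow> bool" where
  Zx: "\<Gamma> x = Some S \<Longrightarrow> ztyping \<Gamma> (Var x) S"
| Zb: "ztyping \<Gamma> (BConst b l) (TBool l)"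
| Zlam: "ztyping (\<Gamma>(x \<mapsto> S1)) t S2 \<Longrightarrow> ztyping \<Gamma> (Lam x S1 t l) (TFun S1 l S2)"
| Zop: "ztyping \<Gamma> t1 (TBool l1) \<Longrightarrow> ztyping \<Gamma> t2 (TBool l2) \<Longrightarrow>
        ztyping \<Gamma> (BinOp op t1 t2) (TBool (sup l1 l2))"
| Zapp: "ztyping \<Gamma> t1 (TFun S11 l S12) \<Longrightarrow> ztyping \<Gamma> t2 S11 \<Longrightarrow>
         ztyping \<Gamma> (App t1 t2) (stamp S12 l)"
| Zif: "ztyping \<Gamma> t (TBool l) \<Longrightarrow> ztyping \<Gamma> t1 (stamp S l) \<Longrightarrow> ztyping \<Gamma> t2 (stamp S l) \<Longrightarrow>
        ztyping \<Gamma> (If t t1 t2) (stamp S l)"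
| Zsub: "ztyping \<Gamma> t S \<Longrightarrow> subty S S' \<Longrightarrow> ztyping \<Gamma> t S'"

end

theory Submission
  imports Defs
begin

inductive_cases SubBoolL: "subty (TBool l) T"
inductive_cases SubBoolR: "subty T (TBool l)"
inductive_cases SubFunL: "subty (TFun A l B) T"
inductive_cases SubFunR: "subty T (TFun A l B)"

lemma subty_refl: "subty S (S::'l::bounded_lattice ty)"
  by (induction S) (auto intro: subty.intros)

lemma subty_trans_aux:
  "\<forall>A C. (subty A (B::'l::bounded_lattice ty) \<longrightarrow> subty B C \<longrightarrow> subty A C)
        \<and> (subty C B \<longrightarrow> subty B A \<longrightarrow> subty C A)"
proof (induction B)
  case (TBool l)
  show ?case
  proof (intro allI conjI impI)
    fix A C assume a: "subty A (TBool l)" "subty (TBool l) C"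
    from a(1) obtain x where "A = TBool x" "x \<le> l" by (cases rule: SubBoolR) auto
    moreover from a(2) obtain y where "C = TBool y" "l \<le> y" by (cases rule: SubBoolL) auto
    ultimately show "subty A C" by (auto intro: subty.intros order_trans)
  next
    fix A C assume a: "subty C (TBool l)" "subty (TBool l) A"
    from a(1) obtain x where "C = TBool x" "x \<le> l" by (cases rule: SubBoolR) auto
    moreover from a(2) obtain y where "A = TBool y" "l \<le> y" by (cases rule: SubBoolL) auto
    ultimately show "subty C A" by (auto intro: subty.intros order_trans)
  qed
next
  case (TFun B1 l B2)
  show ?case
  proof (intro allI conjI impI)
    fix A C assume a: "subty A (TFun B1 l B2)" "subty (TFun B1 l B2) C"
    from a(1) obtain x1 x x2 where 1: "A = TFun x1 x x2" "subty B1 x1" "subty x2 B2" "x \<le> l"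
      by (cases rule: SubFunR) auto
    from a(2) obtain y1 y y2 where 2: "C = TFun y1 y y2" "subty y1 B1" "subty B2 y2" "l \<le> y"
      by (cases rule: SubFunL) auto
    have "subty y1 x1" using TFun.IH(1) 1 2 by blast
    moreover have "subty x2 y2" using TFun.IH(2) 1 2 by blast
    ultimately show "subty A C" using 1 2 by (auto intro: subty.intros order_trans)
  next
    fix A C assume a: "subty C (TFun B1 l B2)" "subty (TFun B1 l B2) A"
    from a(1) obtain x1 x x2 where 1: "C = TFun x1 x x2" "subty B1 x1" "subty x2 B2" "x \<le> l"
      by (cases rule: SubFunR) auto
    from a(2) obtain y1 y y2 where 2: "A = TFun y1 y y2" "subty y1 B1" "subty B2 y2" "l \<le> y"
      by (cases rule: SubFunL) auto
    have "subty y1 x1" using TFun.IH(1) 1 2 by blast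
    moreover have "subty x2 y2" using TFun.IH(2) 1 2 by blast
    ultimately show "subty C A" using 1 2 by (auto intro: subty.intros order_trans)
  qed
qed

lemma subty_trans: "subty A B \<Longrightarrow> subty B C \<Longrightarrow> subty A (C::'l::bounded_lattice ty)"
  using subty_trans_aux by blast

lemma stamp_mono: "subty S S' \<Longrightarrow> l \<le> l' \<Longrightarrow> subty (stamp S l) (stamp S' (l'::'l::bounded_lattice))"
  by (erule subty.cases) (auto intro!: subty.intros intro: sup_mono)

lemma stamp_idem: "stamp (stamp S l) l = stamp S (l::'l::bounded_lattice)"
  by (cases S) (auto simp: sup_assoc)

lemma join_meet_aux:
  "\<forall>S1 S2. (subty S1 (U::'l::bounded_lattice ty) \<longrightarrow> subty S2 U \<longrightarrow> (\<exists>J. tjoin S1 S2 = Some J \<and> subty J U))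
       \<and> (subty U S1 \<longrightarrow> subty U S2 \<longrightarrow> (\<exists>M. tmeet S1 S2 = Some M \<and> subty U M))"
proof (induction U)
  case (TBool l)
  show ?case
  proof (intro allI conjI impI)
    fix S1 S2 assume a: "subty S1 (TBool l)" "subty S2 (TBool l)"
    from a(1) obtain x where "S1 = TBool x" "x \<le> l" by (cases rule: SubBoolR) auto
    moreover from a(2) obtain y where "S2 = TBool y" "y \<le> l" by (cases rule: SubBoolR) auto
    ultimately show "\<exists>J. tjoin S1 S2 = Some J \<and> subty J (TBool l)" by (auto intro: subty.intros)
  next
    fix S1 S2 assume a: "subty (TBool l) S1" "subty (TBool l) S2"
    from a(1) obtain x where "S1 = TBool x" "l \<le> x" by (cases rule: SubBoolL) auto
    moreover from a(2) obtain y where "S2 = TBool y" "l \<le> y" by (cases rule: SubBoolL) auto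
    ultimately show "\<exists>M. tmeet S1 S2 = Some M \<and> subty (TBool l) M" by (auto intro: subty.intros)
  qed
next
  case (TFun A l B)
  show ?case
  proof (intro allI conjI impI)
    fix S1 S2 assume a: "subty S1 (TFun A l B)" "subty S2 (TFun A l B)"
    from a(1) obtain A1 l1 B1 where e1: "S1 = TFun A1 l1 B1" "subty A A1" "subty B1 B" "l1 \<le> l"
      by (cases rule: SubFunR) auto
    from a(2) obtain A2 l2 B2 where e2: "S2 = TFun A2 l2 B2" "subty A A2" "subty B2 B" "l2 \<le> l"
      by (cases rule: SubFunR) auto
    from TFun.IH(1) e1 e2 obtain M where M: "tmeet A1 A2 = Some M" "subty A M" by blast
    from TFun.IH(2) e1 e2 obtain J where J: "tjoin B1 B2 = Some J" "subty J B" by blast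
    show "\<exists>J. tjoin S1 S2 = Some J \<and> subty J (TFun A l B)"
      using e1 e2 M J by (auto intro!: subty.intros)
  next
    fix S1 S2 assume a: "subty (TFun A l B) S1" "subty (TFun A l B) S2"
    from a(1) obtain A1 l1 B1 where e1: "S1 = TFun A1 l1 B1" "subty A1 A" "subty B B1" "l \<le> l1"
      by (cases rule: SubFunL) auto
    from a(2) obtain A2 l2 B2 where e2: "S2 = TFun A2 l2 B2" "subty A2 A" "subty B B2" "l \<le> l2"
      by (cases rule: SubFunL) auto
    from TFun.IH(1) e1 e2 obtain J where J: "tjoin A1 A2 = Some J" "subty J A" by blast
    from TFun.IH(2) e1 e2 obtain M where M: "tmeet B1 B2 = Some M" "subty B M" by blast
    show "\<exists>M. tmeet S1 S2 = Some M \<and> subty (TFun A l B) M"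
      using e1 e2 M J by (auto intro!: subty.intros)
  qed
qed

lemma main: "ztyping \<Gamma> t S \<Longrightarrow> asc_free t \<Longrightarrow> \<exists>S'. subty S' S \<and> styping \<Gamma> t S'"
proof (induction rule: ztyping.induct)
  case (Zx \<Gamma> x S)
  then show ?case by (auto intro: styping.intros subty_refl)
next
  case (Zb \<Gamma> b l)
  then show ?case by (auto intro: styping.intros subty_refl)
next
  case (Zlam \<Gamma> x S1 t S2 l)
  from Zlam.prems have "asc_free t" by simp
  with Zlam.IH obtain S' where "subty S' S2" "styping (\<Gamma>(x \<mapsto> S1)) t S'" by blast
  then show ?case by (meson styping.Slam subty.SubFun subty_refl order_refl)
next
  case (Zop \<Gamma> t1 l1 t2 l2 op)
  then obtain A B where a: "subty A (TBool l1)" "styping \<Gamma> t1 A" "subty B (TBool l2)" "styping \<Gamma> t2 B" by auto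
  from a(1) obtain x where x: "A = TBool x" "x \<le> l1" by (cases rule: SubBoolR) auto
  from a(3) obtain y where y: "B = TBool y" "y \<le> l2" by (cases rule: SubBoolR) auto
  have "styping \<Gamma> (BinOp op t1 t2) (TBool (sup x y))" using a x y by (auto intro: styping.Sop)
  moreover have "subty (TBool (sup x y)) (TBool (sup l1 l2))" using x y by (auto intro: subty.intros sup_mono)
  ultimately show ?case by blast
next
  case (Zapp \<Gamma> t1 S11 l S12 t2)
  then obtain A B where A: "subty A (TFun S11 l S12)" "styping \<Gamma> t1 A"
    and B: "subty B S11" "styping \<Gamma> t2 B" by auto
  from A(1) obtain S11' l' S12' where e: "A = TFun S11' l' S12'" "subty S11 S11'" "subty S12' S12" "l' \<le> l"
    by (cases rule: SubFunR) auto
  have "subty B S11'" using B e subty_trans by blast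
  hence "styping \<Gamma> (App t1 t2) (stamp S12' l')"
    using A(2) B e by (auto intro: styping.Sapp)
  then show ?case using stamp_mono e by blast
next
  case (Zif \<Gamma> t l t1 S t2)
  then obtain C A B where C: "subty C (TBool l)" "styping \<Gamma> t C"
    and A: "subty A (stamp S l)" "styping \<Gamma> t1 A"
    and B: "subty B (stamp S l)" "styping \<Gamma> t2 B" by auto
  from C(1) obtain l' where l': "C = TBool l'" "l' \<le> l" by (cases rule: SubBoolR) auto
  from join_meet_aux A B obtain J where J: "tjoin A B = Some J" "subty J (stamp S l)" by blast
  have "styping \<Gamma> (If t t1 t2) (stamp J l')" using C l' A B J by (auto intro: styping.Sif)
  moreover have "subty (stamp J l') (stamp S l)"
    using stamp_mono[OF J(2) l'(2)] stamp_idem by metis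
  ultimately show ?case by blast
next
  case (Zsub \<Gamma> t S S')
  then show ?case using subty_trans by blast
qed

theorem proposition2:
  fixes \<Gamma> :: "('v, 'l::bounded_lattice) ctx" and t :: "('v, 'l) tm" and S :: "'l ty"
  assumes "asc_free t"
    and "ztyping \<Gamma> t S"
  shows "\<exists>S'. subty S' S \<and> styping \<Gamma> t S'"
  using main assms by blast

end
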